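(* In the setting of the context, the set $\{g^*(z) : g \in G\}$ is a $k(Y)$-basis of $k(X)$.
   Context: Let $k$ be an algebraically closed field of characteristic $p>0$, $G$ a finite $p$-group acting faithfully on a smooth projective curve $X$ over $k$, $Y := X/G$, $\pi : X\to Y$ the quotient map. For $P\in X(k)$ let $G_{P,i}$ be the lower ramification groups, $G_P$ the stabilizer, $d'_P := \sum_{i\ge1}(\#G_{P,i}-1)$. Assume: (A) $G_P$ is normal in $G$ for all $P\in X(k)$; (B) $z \in k(X)$ satisfies $\mathrm{ord}_P(z) \ge -d'_P$ for all $P \in X(k)$ and $\mathrm{tr}_{k(X)/k(Y)}(z) \neq 0$. *)

theory Defs
  imports "HOL-Computational_Algebra.Polynomial"
begin

text \<open>Smooth projective curves over an algebraically closed field k are encoded by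
their function fields: K = k(X) is a field (the type 'K) containing k as a subfield
kk, and K is a function field in one variable over kk.  Closed points of X are the
normalized discrete valuations of K trivial on kk.  Automorphisms of X correspond to
kk-automorphisms of K.\<close>

definition subfield :: "'a::field set \<Rightarrow> bool" where
  "subfield F \<longleftrightarrow> 0 \<in> F \<and> 1 \<in> F \<and> (\<forall>x\<in>F. \<forall>y\<in>F. x + y \<in> F \<and> x * y \<in> F)
     \<and> (\<forall>x\<in>F. - x \<in> F \<and> inverse x \<in> F)"

definition poly_over :: "'a::field set \<Rightarrow> 'a poly \<Rightarrow> bool" where
  "poly_over F q \<longleftrightarrow> (\<forall>i. coeff q i \<in> F)"

definition alg_closed_field :: "'a::field set \<Rightarrow> bool" where
  "alg_closed_field F \<longleftrightarrow>
     (\<forall>q. poly_over F q \<and> degree q \<ge> 1 \<longrightarrow> (\<exists>x\<in>F. poly q x = 0))"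

definition span_over :: "'a::field set \<Rightarrow> 'a set \<Rightarrow> 'a \<Rightarrow> bool" where
  "span_over F B y \<longleftrightarrow> (\<exists>S c. finite S \<and> S \<subseteq> B \<and> (\<forall>b\<in>S. c b \<in> F)
       \<and> y = (\<Sum>b\<in>S. c b * b))"

definition lin_indep_over :: "'a::field set \<Rightarrow> 'a set \<Rightarrow> bool" where
  "lin_indep_over F B \<longleftrightarrow> (\<forall>S c. finite S \<and> S \<subseteq> B \<and> (\<forall>b\<in>S. c b \<in> F)
       \<and> (\<Sum>b\<in>S. c b * b) = 0 \<longrightarrow> (\<forall>b\<in>S. c b = 0))"

definition basis_over :: "'a::field set \<Rightarrow> 'a set \<Rightarrow> bool" where
  "basis_over F B \<longleftrightarrow> lin_indep_over F B \<and> (\<forall>y. span_over F B y)"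

definition finite_dim_over :: "'a::field set \<Rightarrow> bool" where
  "finite_dim_over F \<longleftrightarrow> (\<exists>B. finite B \<and> basis_over F B)"

definition transcendental_over :: "'a::field set \<Rightarrow> 'a \<Rightarrow> bool" where
  "transcendental_over F t \<longleftrightarrow> (\<forall>q. poly_over F q \<and> poly q t = 0 \<longrightarrow> q = 0)"

definition rat_fun_field :: "'a::field set \<Rightarrow> 'a \<Rightarrow> 'a set" where
  "rat_fun_field F t = {poly a t / poly b t | a b. poly_over F a \<and> poly_over F b \<and> poly b t \<noteq> 0}"

definition function_field_1 :: "'a::field set \<Rightarrow> bool" where
  "function_field_1 F \<longleftrightarrow> subfield F \<and>
     (\<exists>t. transcendental_over F t \<and> finite_dim_over (rat_fun_field F t))"

text \<open>A point P of X(k): the normalized discrete valuation ord_P of K, trivial on k.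
  (Value at 0 is normalized to 0; ord_P(0) = \<infinity> is treated separately.)\<close>
definition place :: "'a::field set \<Rightarrow> ('a \<Rightarrow> int) \<Rightarrow> bool" where
  "place F v \<longleftrightarrow> v 0 = 0
     \<and> (\<forall>x y. x \<noteq> 0 \<longrightarrow> y \<noteq> 0 \<longrightarrow> v (x * y) = v x + v y)
     \<and> (\<forall>x y. x \<noteq> 0 \<longrightarrow> y \<noteq> 0 \<longrightarrow> x + y \<noteq> 0 \<longrightarrow> v (x + y) \<ge> min (v x) (v y))
     \<and> (\<forall>c\<in>F. c \<noteq> 0 \<longrightarrow> v c = 0)
     \<and> (\<exists>t. t \<noteq> 0 \<and> v t = 1)"

definition F_automorphism :: "'a::field set \<Rightarrow> ('a \<Rightarrow> 'a) \<Rightarrow> bool" where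
  "F_automorphism F s \<longleftrightarrow> bij s \<and> (\<forall>x y. s (x + y) = s x + s y \<and> s (x * y) = s x * s y)
     \<and> (\<forall>c\<in>F. s c = c)"

text \<open>G is a finite group of F-automorphisms (acting faithfully by construction).\<close>
definition finite_aut_group :: "'a::field set \<Rightarrow> ('a \<Rightarrow> 'a) set \<Rightarrow> bool" where
  "finite_aut_group F G \<longleftrightarrow> finite G \<and> id \<in> G \<and> (\<forall>s\<in>G. F_automorphism F s)
     \<and> (\<forall>s\<in>G. \<forall>t\<in>G. s \<circ> t \<in> G) \<and> (\<forall>s\<in>G. inv s \<in> G)"

text \<open>k(Y) = k(X)^G.\<close>
definition fixed_field :: "('a \<Rightarrow> 'a) set \<Rightarrow> 'a set" where
  "fixed_field G = {x. \<forall>s\<in>G. s x = x}"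

text \<open>Trace of the Galois extension k(X)/k(X)^G (Galois group G by Artin's theorem).\<close>
definition trace_G :: "('a \<Rightarrow> 'a::field) set \<Rightarrow> 'a \<Rightarrow> 'a" where
  "trace_G G z = (\<Sum>s\<in>G. s z)"

definition stab :: "('a \<Rightarrow> 'a) set \<Rightarrow> ('a \<Rightarrow> int) \<Rightarrow> ('a \<Rightarrow> 'a) set" where
  "stab G v = {s\<in>G. \<forall>x. v (s x) = v x}"

definition val_ring :: "('a::field \<Rightarrow> int) \<Rightarrow> 'a set" where
  "val_ring v = {f. f = 0 \<or> v f \<ge> 0}"

definition ram_group :: "('a::field \<Rightarrow> 'a) set \<Rightarrow> ('a \<Rightarrow> int) \<Rightarrow> nat \<Rightarrow> ('a \<Rightarrow> 'a) set" where
  "ram_group G v i = {s\<in>stab G v. \<forall>f\<in>val_ring v. s f = f \<or> v (s f - f) \<ge> int i + 1}"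

definition d_prime :: "('a::field \<Rightarrow> 'a) set \<Rightarrow> ('a \<Rightarrow> int) \<Rightarrow> nat" where
  "d_prime G v = (\<Sum>i\<in>{i. 1 \<le> i \<and> 1 < card (ram_group G v i)}. card (ram_group G v i) - 1)"

end

theory Submission imports Defs "Jordan_Normal_Form.Determinant" "HOL-Algebra.Group_Action" "HOL-Algebra.Elementary_Groups" begin

lemma pgroup_fix_mod:
  fixes Gr :: "('g, 'b) monoid_scheme" and act :: "'g \<Rightarrow> 'a \<Rightarrow> 'a" and p :: nat
  assumes grp: "group Gr" and ord: "order Gr = p ^ n" and pr: "prime p"
    and S: "finite S"
    and cl: "\<And>g s. g \<in> carrier Gr \<Longrightarrow> s \<in> S \<Longrightarrow> act g s \<in> S"
    and one: "\<And>s. s \<in> S \<Longrightarrow> act \<one>\<^bsub>Gr\<^esub> s = s"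
    and mult: "\<And>g h s. g \<in> carrier Gr \<Longrightarrow> h \<in> carrier Gr \<Longrightarrow> s \<in> S \<Longrightarrow> act (g \<otimes>\<^bsub>Gr\<^esub> h) s = act g (act h s)"
  shows "card S mod p = card {s\<in>S. \<forall>g\<in>carrier Gr. act g s = s} mod p"
proof -
  interpret Gr: group Gr by (rule grp)
  define \<phi> where "\<phi> g = (\<lambda>s\<in>S. act g s)" for g
  have bij: "\<phi> g \<in> Bij S" if g: "g \<in> carrier Gr" for g
  proof -
    have "bij_betw (act g) S S"
    proof (rule bij_betwI[where g = "act (inv\<^bsub>Gr\<^esub> g)"])
      show "act g \<in> S \<rightarrow> S" using cl g by auto
      show "act (inv\<^bsub>Gr\<^esub> g) \<in> S \<rightarrow> S" using cl g by auto
      show "act (inv\<^bsub>Gr\<^esub> g) (act g x) = x" if "x \<in> S" for x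
      proof -
        have "act (inv\<^bsub>Gr\<^esub> g \<otimes>\<^bsub>Gr\<^esub> g) x = act (inv\<^bsub>Gr\<^esub> g) (act g x)"
          using mult Gr.inv_closed g that by blast
        moreover have "inv\<^bsub>Gr\<^esub> g \<otimes>\<^bsub>Gr\<^esub> g = \<one>\<^bsub>Gr\<^esub>" using g by (rule Gr.l_inv)
        ultimately show ?thesis using one that by simp
      qed
      show "act g (act (inv\<^bsub>Gr\<^esub> g) x) = x" if "x \<in> S" for x
      proof -
        have "act (g \<otimes>\<^bsub>Gr\<^esub> inv\<^bsub>Gr\<^esub> g) x = act g (act (inv\<^bsub>Gr\<^esub> g) x)"
          using mult Gr.inv_closed g that by blast
        moreover have "g \<otimes>\<^bsub>Gr\<^esub> inv\<^bsub>Gr\<^esub> g = \<one>\<^bsub>Gr\<^esub>" using g by (rule Gr.r_inv)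
        ultimately show ?thesis using one that by simp
      qed
    qed
    then have "bij_betw (\<phi> g) S S" unfolding \<phi>_def by simp
    moreover have "\<phi> g \<in> extensional S" unfolding \<phi>_def by simp
    ultimately show ?thesis unfolding Bij_def by simp
  qed
  have "group_action Gr S \<phi>"
    unfolding group_action_def group_hom_def group_hom_axioms_def
  proof (intro conjI)
    show "group Gr" by (rule grp)
    show "group (BijGroup S)" by (rule group_BijGroup)
    show "\<phi> \<in> hom Gr (BijGroup S)"
    proof (rule homI)
      show "\<phi> x \<in> carrier (BijGroup S)" if "x \<in> carrier Gr" for x
        using bij[OF that] by (simp add: BijGroup_def)
      show "\<phi> (x \<otimes>\<^bsub>Gr\<^esub> y) = \<phi> x \<otimes>\<^bsub>BijGroup S\<^esub> \<phi> y" if "x \<in> carrier Gr" "y \<in> carrier Gr" for x y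
      proof -
        have "\<phi> x \<otimes>\<^bsub>BijGroup S\<^esub> \<phi> y = compose S (\<phi> x) (\<phi> y)"
          using bij[OF that(1)] bij[OF that(2)] by (simp add: BijGroup_def)
        also have "\<dots> = \<phi> (x \<otimes>\<^bsub>Gr\<^esub> y)"
          unfolding compose_def \<phi>_def by (rule restrict_ext) (simp add: mult cl that)
        finally show ?thesis by simp
      qed
    qed
  qed
  then interpret ga: group_action Gr S \<phi> .
  define Fix where "Fix = {s\<in>S. \<forall>g\<in>carrier Gr. act g s = s}"
  have orbfin: "finite orb" if "orb \<in> orbits Gr S \<phi>" for orb
    proof -
    have "orb \<subseteq> S" using that ga.orbits_coverture by blast
    then show ?thesis using S finite_subset by blast
  qed
  have orbcard: "card orb = 1 \<or> p dvd card orb" if orbin: "orb \<in> orbits Gr S \<phi>" for orb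
  proof -
    obtain x where x: "x \<in> S" "orb = orbit Gr \<phi> x" using orbin unfolding orbits_def by auto
    have "card orb * card (stabilizer Gr \<phi> x) = p ^ n" using ga.orbit_stabilizer_theorem[OF x(1)] x(2) ord
      by simp
    then have "card orb dvd p ^ n" by (rule dvdI[OF sym])
    then obtain i where "card orb = p ^ i" using divides_primepow_nat[OF pr] by auto
    then show ?thesis by (cases i) auto
  qed
  have "card S = (\<Sum>orb\<in>orbits Gr S \<phi>. \<Sum>x\<in>orb. 1)"
    using ga.disjoint_sum[OF S, of "\<lambda>_. 1::nat"] by simp
  also have "\<dots> = (\<Sum>orb\<in>orbits Gr S \<phi>. card orb)" by simp
  finally have cS: "card S mod p = (\<Sum>orb\<in>orbits Gr S \<phi>. card orb mod p) mod p"
    by (simp add: mod_sum_eq)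
  have s2: "(\<Sum>orb\<in>orbits Gr S \<phi>. card orb mod p) = (\<Sum>orb\<in>orbits Gr S \<phi>. (if card orb = 1 then 1 else 0) mod p)"
    using orbcard by (intro sum.cong refl) (auto simp: dvd_eq_mod_eq_0)
  have s3: "(\<Sum>orb\<in>orbits Gr S \<phi>. (if card orb = 1 then 1 else 0) mod p) mod p = (\<Sum>orb\<in>orbits Gr S \<phi>. (if card orb = 1 then 1 else 0)) mod p"
    by (rule mod_sum_eq)
  have s4: "(\<Sum>orb\<in>orbits Gr S \<phi>. (if card orb = 1 then 1 else 0)) = card {orb \<in> orbits Gr S \<phi>. card orb = 1}"
  proof -
    have finorbs: "finite (orbits Gr S \<phi>)" unfolding orbits_def using S by simp
    show ?thesis using sum.inter_filter[OF finorbs, of "\<lambda>_. 1::nat" "\<lambda>orb. card orb = 1"] by simp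
  qed
  have s5: "{orb \<in> orbits Gr S \<phi>. card orb = 1} = (\<lambda>s. {s}) ` Fix"
  proof (intro equalityI subsetI)
    fix orb assume "orb \<in> {orb \<in> orbits Gr S \<phi>. card orb = 1}"
    then obtain x where x: "x \<in> S" "orb = orbit Gr \<phi> x" "card orb = 1" unfolding orbits_def by auto
    have "x \<in> orb" using ga.orbit_refl x by auto
    moreover obtain a where "orb = {a}" using x(3) card_1_singletonE by blast
    ultimately have o1: "orb = {x}" by simp
    have "act g x = x" if "g \<in> carrier Gr" for g
    proof -
      have "\<phi> g x \<in> orb" using x(2) that unfolding orbit_def by auto
      then show ?thesis using o1 x(1) by (simp add: \<phi>_def)
    qed
    then show "orb \<in> (\<lambda>s. {s}) ` Fix" using o1 x(1) unfolding Fix_def by auto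
  next
    fix orb assume "orb \<in> (\<lambda>s. {s}) ` Fix"
    then obtain x where x: "x \<in> Fix" "orb = {x}" by auto
    have "orbit Gr \<phi> x = {x}" using x(1) Gr.one_closed unfolding orbit_def Fix_def \<phi>_def by (auto intro!: exI[of _ "\<one>\<^bsub>Gr\<^esub>"])
    then show "orb \<in> {orb \<in> orbits Gr S \<phi>. card orb = 1}" using x unfolding orbits_def Fix_def by auto
  qed
  have s6: "card ((\<lambda>s. {s}) ` Fix) = card Fix" by (simp add: card_image)
  show ?thesis unfolding Fix_def[symmetric] by (simp only: cS s2 s3 s4 s5 s6)
qed


unbundle no m_inv_syntax

lemma reindex_G:
  fixes G :: "('a \<Rightarrow> 'a) set" and f :: "('a \<Rightarrow> 'a) \<Rightarrow> 'b::comm_monoid_add"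
  assumes comp: "\<forall>s\<in>G. \<forall>t\<in>G. s \<circ> t \<in> G" and invG: "\<forall>s\<in>G. inv s \<in> G"
    and bijG: "\<forall>s\<in>G. bij s" and j: "j \<in> G"
  shows "(\<Sum>k\<in>G. f (j \<circ> k)) = (\<Sum>k\<in>G. f k)"
proof -
  have c1: "inv j \<circ> j = id" using bijG j by (simp add: bij_is_inj)
  have c2: "j \<circ> inv j = id" using bijG j by (simp add: bij_is_surj surj_iff[symmetric])
  have bj: "bij_betw ((\<circ>) j) G G"
  proof (rule bij_betwI[where g = "(\<circ>) (inv j)"])
    show "(\<circ>) j \<in> G \<rightarrow> G" using comp j by auto
    show "(\<circ>) (inv j) \<in> G \<rightarrow> G" using comp invG j by auto
    show "inv j \<circ> (j \<circ> x) = x" for x using c1 by (metis comp_assoc id_comp)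
    show "j \<circ> (inv j \<circ> y) = y" for y using c2 by (metis comp_assoc id_comp)
  qed
  show ?thesis using sum.reindex_bij_betw[OF bj, of f] by simp
qed

lemma group_G:
  fixes G :: "('a \<Rightarrow> 'a) set"
  assumes idG: "id \<in> G" and comp: "\<forall>s\<in>G. \<forall>t\<in>G. s \<circ> t \<in> G" and invG: "\<forall>s\<in>G. inv s \<in> G"
    and bijG: "\<forall>s\<in>G. bij s"
  shows "group \<lparr>carrier = G, monoid.mult = (\<circ>), one = id\<rparr>"
proof (rule groupI)
  show "\<exists>y\<in>carrier \<lparr>carrier = G, monoid.mult = (\<circ>), one = id\<rparr>.
          y \<otimes>\<^bsub>\<lparr>carrier = G, monoid.mult = (\<circ>), one = id\<rparr>\<^esub> x = \<one>\<^bsub>\<lparr>carrier = G, monoid.mult = (\<circ>), one = id\<rparr>\<^esub>"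
    if "x \<in> carrier \<lparr>carrier = G, monoid.mult = (\<circ>), one = id\<rparr>" for x
    using that invG bijG by (auto intro!: bexI[of _ "inv x"] simp: bij_is_inj)
qed (use idG comp in \<open>auto simp: comp_assoc\<close>)

lemma char_of_nat_mod:
  assumes "CHAR('K::field) = p" shows "(of_nat (m mod p) :: 'K) = of_nat m"
proof -
  have p0: "(of_nat p :: 'K) = 0" using assms by (simp add: of_nat_eq_0_iff_char_dvd)
  have "(of_nat m :: 'K) = of_nat (m mod p + p * (m div p))" by simp
  also have "\<dots> = of_nat (m mod p)" by (simp only: of_nat_add of_nat_mult p0) simp
  finally show ?thesis by simp
qed

lemma char_of_int_mod:
  assumes "CHAR('K::field) = p" shows "(of_int (a mod int p) :: 'K) = of_int a"
proof -
  have p0: "(of_int (int p) :: 'K) = 0" using assms by (simp add: of_nat_eq_0_iff_char_dvd)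
  have "(of_int a :: 'K) = of_int (a mod int p + int p * (a div int p))" by simp
  also have "\<dots> = of_int (a mod int p)" by (simp only: of_int_add of_int_mult p0) simp
  finally show ?thesis by simp
qed

lemma kernel_zero:
  fixes G :: "('K::field \<Rightarrow> 'K) set" and z :: 'K and x :: "('K \<Rightarrow> 'K) \<Rightarrow> 'K" and p :: nat
  assumes fin: "finite G" and idG: "id \<in> G" and comp: "\<forall>s\<in>G. \<forall>t\<in>G. s \<circ> t \<in> G"
    and invG: "\<forall>s\<in>G. inv s \<in> G" and bijG: "\<forall>s\<in>G. bij s"
    and cardG: "card G = p ^ n" and pr: "prime p" and ch: "CHAR('K) = p"
    and tr: "(\<Sum>s\<in>G. s z) \<noteq> 0"
    and eq: "\<forall>h\<in>G. (\<Sum>g\<in>G. x g * (h \<circ> g) z) = 0"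
    and g0: "g0 \<in> G"
  shows "x g0 = 0"
proof (rule ccontr)
  assume nz: "x g0 \<noteq> 0"
  define x0 where "x0 = (\<lambda>g. if g \<in> G then x g else 0)"
  define T where "T k y = (\<lambda>g. if g \<in> G then y (inv k \<circ> g) else (0::'K))"
    for k :: "'K \<Rightarrow> 'K" and y :: "('K \<Rightarrow> 'K) \<Rightarrow> 'K"
  define eqs where "eqs y \<longleftrightarrow> (\<forall>h\<in>G. (\<Sum>g\<in>G. y g * (h \<circ> g) z) = 0)"
    for y :: "('K \<Rightarrow> 'K) \<Rightarrow> 'K"
  define comb where "comb c = (\<lambda>g. \<Sum>k\<in>G. of_nat (c k) * T k x0 g)"
    for c :: "('K \<Rightarrow> 'K) \<Rightarrow> nat"
  define V where "V = comb ` (PiE G (\<lambda>_. {..<p}))"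
  have p2: "p \<ge> 2" using pr by (simp add: prime_ge_2_nat)
  have inv_cancel: "inv k \<circ> (k \<circ> g) = g" if "k \<in> G" for k g
  proof -
    have "inv k \<circ> k = id" using bijG that by (simp add: bij_is_inj)
    then show ?thesis by (metis comp_assoc id_comp)
  qed
  have inv_cancel1: "inv k \<circ> k = id" if "k \<in> G" for k
    using bijG that by (simp add: bij_is_inj)
  have inv_comp: "inv (j \<circ> k) = inv k \<circ> inv j" if "j \<in> G" "k \<in> G" for j k
    using bijG that by (simp add: o_inv_distrib)
  have ginG: "inv k \<circ> g \<in> G" if "k \<in> G" "g \<in> G" for k g
    using comp invG that by blast
  have RI: "(\<Sum>k\<in>G. f (j \<circ> k)) = (\<Sum>k\<in>G. f k)" if "j \<in> G" for j and f :: "('K \<Rightarrow> 'K) \<Rightarrow> 'K"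
    using reindex_G[OF comp invG bijG that] .
  have T_id: "T id y = y" if "\<forall>g. g \<notin> G \<longrightarrow> y g = 0" for y
    unfolding T_def using that by auto
  have T_comp: "T (j \<circ> k) y = T j (T k y)" if "j \<in> G" "k \<in> G" for j k y
    unfolding T_def using that ginG inv_comp by (auto simp: o_assoc)
  have T_eqs: "eqs (T k y)" if ey: "eqs y" and k: "k \<in> G" for k y
  proof -
    { fix h assume h: "h \<in> G"
      have "(\<Sum>g\<in>G. T k y g * (h \<circ> g) z) = (\<Sum>g\<in>G. T k y (k \<circ> g) * (h \<circ> (k \<circ> g)) z)"
        using RI[OF k, of "\<lambda>g. T k y g * (h \<circ> g) z"] by simp
      also have "\<dots> = (\<Sum>g\<in>G. y g * ((h \<circ> k) \<circ> g) z)"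
        using k comp by (intro sum.cong refl) (simp add: T_def inv_cancel)
      also have "\<dots> = 0" using ey h k comp unfolding eqs_def by blast
      finally have "(\<Sum>g\<in>G. T k y g * (h \<circ> g) z) = 0" . }
    then show ?thesis unfolding eqs_def by blast
  qed
  have x0_eqs: "eqs x0"
    unfolding eqs_def
  proof
    fix h assume h: "h \<in> G"
    have "(\<Sum>g\<in>G. x0 g * (h \<circ> g) z) = (\<Sum>g\<in>G. x g * (h \<circ> g) z)"
      by (intro sum.cong refl) (simp add: x0_def)
    then show "(\<Sum>g\<in>G. x0 g * (h \<circ> g) z) = 0" using eq h by simp
  qed
  have comb_eqs: "eqs (comb c)" for c
    unfolding eqs_def
  proof
    fix h assume h: "h \<in> G"
    have "(\<Sum>g\<in>G. comb c g * (h \<circ> g) z) = (\<Sum>g\<in>G. \<Sum>k\<in>G. of_nat (c k) * (T k x0 g * (h \<circ> g) z))"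
      unfolding comb_def by (simp add: sum_distrib_right mult.assoc)
    also have "\<dots> = (\<Sum>k\<in>G. \<Sum>g\<in>G. of_nat (c k) * (T k x0 g * (h \<circ> g) z))"
      by (rule sum.swap)
    also have "\<dots> = (\<Sum>k\<in>G. of_nat (c k) * (\<Sum>g\<in>G. T k x0 g * (h \<circ> g) z))"
      by (simp add: sum_distrib_left)
    also have "\<dots> = 0"
      using T_eqs[OF x0_eqs] h unfolding eqs_def by simp
    finally show "(\<Sum>g\<in>G. comb c g * (h \<circ> g) z) = 0" .
  qed
  have comb_out: "comb c g = 0" if "g \<notin> G" for c g
    unfolding comb_def T_def using that by simp
  have finV: "finite V" unfolding V_def using fin by (simp add: finite_PiE)
  have V_eqs: "eqs v" "\<forall>g. g \<notin> G \<longrightarrow> v g = 0" if "v \<in> V" for v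
    using that comb_eqs comb_out unfolding V_def by auto
  have x0V: "x0 \<in> V"
  proof -
    define c1 where "c1 = (\<lambda>k\<in>G. if k = id then 1 else (0::nat))"
    have "c1 \<in> PiE G (\<lambda>_. {..<p})" unfolding c1_def using p2 by auto
    moreover have "comb c1 = x0"
    proof
      fix g
      have "comb c1 g = (\<Sum>k\<in>G. if k = id then T k x0 g else 0)"
        unfolding comb_def c1_def by (intro sum.cong refl) auto
      also have "\<dots> = T id x0 g" using fin idG by simp
      also have "\<dots> = x0 g" using T_id[of x0] by (simp add: x0_def)
      finally show "comb c1 g = x0 g" .
    qed
    ultimately show ?thesis unfolding V_def by blast
  qed
  have zeroV: "(\<lambda>_. 0) \<in> V"
  proof -
    have "(\<lambda>k\<in>G. 0::nat) \<in> PiE G (\<lambda>_. {..<p})" using p2 by auto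
    moreover have "comb (\<lambda>k\<in>G. 0::nat) = (\<lambda>_. 0)" unfolding comb_def by (auto intro!: ext sum.neutral)
    ultimately show ?thesis unfolding V_def by (metis image_eqI)
  qed
  have V_T: "T j v \<in> V" if j: "j \<in> G" and v: "v \<in> V" for j v
  proof -
    obtain c where c: "c \<in> PiE G (\<lambda>_. {..<p})" and vc: "v = comb c" using v unfolding V_def by auto
    define c' where "c' = (\<lambda>k\<in>G. c (inv j \<circ> k))"
    have c': "c' \<in> PiE G (\<lambda>_. {..<p})" unfolding c'_def using c ginG j by (auto simp: PiE_iff)
    have "T j (comb c) = comb c'"
    proof
      fix g
      show "T j (comb c) g = comb c' g"
      proof (cases "g \<in> G")
        case False
        then show ?thesis using comb_out by (simp add: T_def)
      next
        case True
        have "T j (comb c) g = (\<Sum>k\<in>G. of_nat (c k) * x0 (inv k \<circ> (inv j \<circ> g)))"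
          unfolding T_def comb_def using True ginG[OF j True] ginG by (simp)
        also have "\<dots> = (\<Sum>k\<in>G. of_nat (c (inv j \<circ> (j \<circ> k))) * x0 (inv (j \<circ> k) \<circ> g))"
          using j by (intro sum.cong refl) (simp add: inv_cancel[OF j] inv_comp[OF j] comp_assoc)
        also have "\<dots> = (\<Sum>k\<in>G. of_nat (c (inv j \<circ> k)) * x0 (inv k \<circ> g))"
          by (rule RI[OF j, of "\<lambda>k. of_nat (c (inv j \<circ> k)) * x0 (inv k \<circ> g)"])
        also have "\<dots> = comb c' g"
          unfolding comb_def T_def c'_def using True by (intro sum.cong refl) simp
        finally show ?thesis .
      qed
    qed
    then show ?thesis using c' vc unfolding V_def by blast
  qed
  have V_add: "(\<lambda>g. u g + of_nat i * v g) \<in> V" if u: "u \<in> V" and v: "v \<in> V" for u v i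
  proof -
    obtain c1 where c1: "c1 \<in> PiE G (\<lambda>_. {..<p})" and uc: "u = comb c1" using u unfolding V_def by auto
    obtain c2 where c2: "c2 \<in> PiE G (\<lambda>_. {..<p})" and vc: "v = comb c2" using v unfolding V_def by auto
    define c' where "c' = (\<lambda>k\<in>G. (c1 k + i * c2 k) mod p)"
    have c': "c' \<in> PiE G (\<lambda>_. {..<p})" unfolding c'_def using p2 by (auto simp: PiE_iff)
    have "comb c' = (\<lambda>g. u g + of_nat i * v g)"
    proof
      fix g
      have "comb c' g = (\<Sum>k\<in>G. (of_nat (c1 k) + of_nat i * of_nat (c2 k)) * T k x0 g)"
        unfolding comb_def c'_def by (intro sum.cong refl) (simp add: char_of_nat_mod[OF ch])
      also have "\<dots> = u g + of_nat i * v g"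
        unfolding uc vc comb_def by (simp add: sum.distrib sum_distrib_left algebra_simps)
      finally show "comb c' g = u g + of_nat i * v g" .
    qed
    then show ?thesis using c' unfolding V_def by (metis image_eqI)
  qed
  define Gr :: "('K \<Rightarrow> 'K) monoid" where "Gr = \<lparr>carrier = G, monoid.mult = (\<circ>), one = id\<rparr>"
  have grp: "group Gr" unfolding Gr_def using group_G[OF idG comp invG bijG] .
  have ordGr: "order Gr = p ^ n" unfolding Gr_def order_def using cardG by simp
  have cnt1: "card V mod p = card {s\<in>V. \<forall>g\<in>carrier Gr. T g s = s} mod p"
    by (rule pgroup_fix_mod[OF grp ordGr pr finV])
       (auto simp: Gr_def V_T T_comp intro!: T_id dest: V_eqs(2))
  define Zp where "Zp = integer_mod_group p"
  have grp2: "group Zp" unfolding Zp_def by simp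
  have carr2: "carrier Zp = {0..<int p}" unfolding Zp_def using p2 by (simp add: carrier_integer_mod_group)
  have ord2: "order Zp = p ^ 1" unfolding order_def carr2 by simp
  define act2 where "act2 i u = (\<lambda>g. u g + of_int i * x0 g)" for i :: int and u :: "('K \<Rightarrow> 'K) \<Rightarrow> 'K"
  have cnt2: "card V mod p = card {s\<in>V. \<forall>i\<in>carrier Zp. act2 i s = s} mod p"
  proof (rule pgroup_fix_mod[OF grp2 ord2 pr finV])
    show "act2 i s \<in> V" if "i \<in> carrier Zp" "s \<in> V" for i s
    proof -
      have "act2 i s = (\<lambda>g. s g + of_nat (nat i) * x0 g)" using that carr2 by (simp add: act2_def)
      then show ?thesis using V_add[OF that(2) x0V] by simp
    qed
    show "act2 \<one>\<^bsub>Zp\<^esub> s = s" for s unfolding Zp_def act2_def by simp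
    show "act2 (i \<otimes>\<^bsub>Zp\<^esub> j) s = act2 i (act2 j s)" for i j s
      unfolding Zp_def act2_def by (simp add: char_of_int_mod[OF ch] algebra_simps)
  qed
  have emp: "{s\<in>V. \<forall>i\<in>carrier Zp. act2 i s = s} = {}"
  proof (rule ccontr)
    assume "{s\<in>V. \<forall>i\<in>carrier Zp. act2 i s = s} \<noteq> {}"
    then obtain s where "act2 1 s = s" using carr2 p2 by fastforce
    then have "s g0 + x0 g0 = s g0" unfolding act2_def by (metis of_int_1 mult_1)
    then show False using nz g0 by (simp add: x0_def)
  qed
  have "card V mod p = 0" using cnt2 unfolding emp by simp
  then have dvdF: "p dvd card {s\<in>V. \<forall>g\<in>G. T g s = s}" using cnt1 by (simp add: Gr_def dvd_eq_mod_eq_0)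
  define Fx where "Fx = {s\<in>V. \<forall>g\<in>G. T g s = s}"
  have finF: "finite Fx" unfolding Fx_def using finV by simp
  have zF: "(\<lambda>_. 0) \<in> Fx" unfolding Fx_def T_def using zeroV by auto
  obtain y where yF: "y \<in> Fx" and ynz: "y \<noteq> (\<lambda>_. 0)"
  proof (rule ccontr)
    assume "\<not> thesis"
    then have "Fx \<subseteq> {\<lambda>_. 0}" using that by blast
    then have "card Fx \<le> 1" using card_mono[of "{\<lambda>_. 0}" Fx] by simp
    moreover have "card Fx > 0" using finF zF card_gt_0_iff by blast
    moreover have "p dvd card Fx" using dvdF Fx_def by simp
    ultimately show False using p2 by (metis dvd_imp_le le_antisym One_nat_def not_less_eq_eq numeral_2_eq_2 order_trans)
  qed
  have yV: "y \<in> V" and yfix: "\<forall>g\<in>G. T g y = y" using yF unfolding Fx_def by auto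
  obtain g1 where g1: "y g1 \<noteq> 0" using ynz by auto
  have g1G: "g1 \<in> G" using V_eqs(2)[OF yV] g1 by auto
  have yconst: "y g = y id" if "g \<in> G" for g
  proof -
    have "y g = T g y g" using yfix that by simp
    also have "\<dots> = y id" using that inv_cancel1 by (simp add: T_def)
    finally show ?thesis .
  qed
  have yid: "y id \<noteq> 0" using g1 yconst[OF g1G] by simp
  have "(\<Sum>g\<in>G. y g * (id \<circ> g) z) = 0" using V_eqs(1)[OF yV] idG unfolding eqs_def by blast
  moreover have "(\<Sum>g\<in>G. y g * (id \<circ> g) z) = y id * (\<Sum>g\<in>G. g z)"
    by (simp add: sum_distrib_left yconst)
  ultimately show False using yid tr by simp
qed


lemma additive_sum:
  fixes s :: "'a::comm_monoid_add \<Rightarrow> 'a"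
  assumes "\<forall>a b. s (a + b) = s a + s b" "s 0 = 0"
  shows "s (sum f A) = (\<Sum>i\<in>A. s (f i))"
  by (induction A rule: infinite_finite_induct) (simp_all add: assms)

theorem proposition3p1:
  fixes kk :: "'K::field set" and p :: nat and G :: "('K \<Rightarrow> 'K) set" and z :: 'K
  assumes "prime p" and "CHAR('K) = p"
    and "subfield kk" and "alg_closed_field kk" and "function_field_1 kk"
    and "finite_aut_group kk G" and "\<exists>n. card G = p ^ n"
    and A: "\<forall>v. place kk v \<longrightarrow> (\<forall>s\<in>G. \<forall>t\<in>stab G v. s \<circ> t \<circ> inv s \<in> stab G v)"
    and B1: "\<forall>v. place kk v \<longrightarrow> z \<noteq> 0 \<longrightarrow> v z \<ge> - int (d_prime G v)"
    and B2: "trace_G G z \<noteq> 0"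
  shows "basis_over (fixed_field G) ((\<lambda>s. s z) ` G)"
proof -
  have fin: "finite G" and idG: "id \<in> G" and autG: "\<forall>s\<in>G. F_automorphism kk s"
    and comp: "\<forall>s\<in>G. \<forall>t\<in>G. s \<circ> t \<in> G" and invG: "\<forall>s\<in>G. inv s \<in> G"
    using assms(6) unfolding finite_aut_group_def by auto
  have bijG: "\<forall>s\<in>G. bij s" using autG unfolding F_automorphism_def by auto
  have add: "s (a + b) = s a + s b" if "s \<in> G" for s a b
    using autG that unfolding F_automorphism_def by auto
  have mul: "s (a * b) = s a * s b" if "s \<in> G" for s a b
    using autG that unfolding F_automorphism_def by auto
  have s0: "s 0 = 0" if "s \<in> G" for s
    using add[OF that, of 0 0] by (metis add_cancel_right_right add_0)
  have ssum: "s (sum f A) = (\<Sum>i\<in>A. s (f i))" if "s \<in> G" for s and A :: "'x set" and f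
    using additive_sum[of s f A] add s0 that by blast
  have sinv: "s (inv s w) = w" if "s \<in> G" for s w
    using bijG that by (simp add: bij_is_surj surj_f_inv_f)
  obtain n where cardG: "card G = p ^ n" using assms(7) by auto
  have pr: "prime p" and ch: "CHAR('K) = p" using assms(1,2) .
  define L where "L = fixed_field G"
  have inL: "s c = c" if "c \<in> L" "s \<in> G" for c s using that unfolding L_def fixed_field_def by auto
  have tr: "(\<Sum>s\<in>G. s z) \<noteq> 0" using B2 unfolding trace_G_def .
  have KZ: "x g0 = 0" if "\<forall>h\<in>G. (\<Sum>g\<in>G. x g * (h \<circ> g) z) = 0" "g0 \<in> G" for x g0
    using kernel_zero[OF fin idG comp invG bijG cardG pr ch tr that] .
  have injz: "inj_on (\<lambda>s. s z) G"
  proof (rule inj_onI)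
    fix g1 g2 assume g: "g1 \<in> G" "g2 \<in> G" "g1 z = g2 z"
    show "g1 = g2"
    proof (rule ccontr)
      assume ne: "g1 \<noteq> g2"
      define x where "x g = (if g = g1 then 1 else if g = g2 then -1 else 0::'K)" for g
      have "\<forall>h\<in>G. (\<Sum>g\<in>G. x g * (h \<circ> g) z) = 0"
      proof
        fix h assume h: "h \<in> G"
        have "(\<Sum>g\<in>G. x g * (h \<circ> g) z) = (\<Sum>g\<in>G. (if g = g1 then h (g1 z) else 0) + (if g = g2 then - h (g2 z) else 0))"
          by (intro sum.cong refl) (auto simp: x_def ne)
        also have "\<dots> = h (g1 z) - h (g2 z)" using fin g by (simp add: sum.distrib)
        also have "\<dots> = 0" using g by simp
        finally show "(\<Sum>g\<in>G. x g * (h \<circ> g) z) = 0" .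
      qed
      then have "x g1 = 0" using KZ g by blast
      then show False by (simp add: x_def)
    qed
  qed
  have indep: "lin_indep_over L ((\<lambda>s. s z) ` G)"
    unfolding lin_indep_over_def
  proof (intro allI impI)
    fix S c assume H: "finite S \<and> S \<subseteq> (\<lambda>s. s z) ` G \<and> (\<forall>b\<in>S. c b \<in> L) \<and> (\<Sum>b\<in>S. c b * b) = 0"
    define x where "x g = (if g z \<in> S then c (g z) else 0)" for g
    have xL: "x g \<in> L" for g using H unfolding x_def L_def fixed_field_def by (auto simp: s0)
    have S_eq: "S = (\<lambda>s. s z) ` {g\<in>G. g z \<in> S}" using H by auto
    have sum0: "(\<Sum>g\<in>G. x g * g z) = 0"
    proof -
      have "(\<Sum>g\<in>G. x g * g z) = (\<Sum>g\<in>{g\<in>G. g z \<in> S}. c (g z) * g z)"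
      proof -
        have "(\<Sum>g\<in>G. x g * g z) = (\<Sum>g\<in>G. if g z \<in> S then c (g z) * g z else 0)"
          unfolding x_def by (intro sum.cong refl) simp
        also have "\<dots> = (\<Sum>g\<in>{g\<in>G. g z \<in> S}. c (g z) * g z)"
          using fin by (simp add: sum.inter_filter)
        finally show ?thesis .
      qed
      also have "\<dots> = (\<Sum>b\<in>S. c b * b)"
        using sum.reindex[OF inj_on_subset[OF injz], of "{g\<in>G. g z \<in> S}" "\<lambda>b. c b * b"] S_eq by auto
      also have "\<dots> = 0" using H by simp
      finally show ?thesis .
    qed
    have "\<forall>h\<in>G. (\<Sum>g\<in>G. x g * (h \<circ> g) z) = 0"
    proof
      fix h assume h: "h \<in> G"
      have "(\<Sum>g\<in>G. x g * (h \<circ> g) z) = (\<Sum>g\<in>G. h (x g * g z))"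
        using h by (intro sum.cong refl) (simp add: mul inL[OF xL h])
      also have "\<dots> = h (\<Sum>g\<in>G. x g * g z)" using additive_sum[of h "\<lambda>g. x g * g z" G] add[OF h] s0[OF h] by simp
      also have "\<dots> = 0" using sum0 s0 h by simp
      finally show "(\<Sum>g\<in>G. x g * (h \<circ> g) z) = 0" .
    qed
    then have "x g = 0" if "g \<in> G" for g using KZ that by blast
    then show "\<forall>b\<in>S. c b = 0" using H unfolding x_def by fastforce
  qed
  define N where "N = card G"
  obtain e where e: "bij_betw e {0..<N} G" using ex_bij_betw_nat_finite[OF fin] N_def by auto
  define M where "M = mat N N (\<lambda>(i,j). (e i \<circ> e j) z)"
  have Mc: "M \<in> carrier_mat N N" unfolding M_def by simp
  have eG: "e i \<in> G" if "i < N" for i using e that bij_betwE by fastforce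
  have esurj: "\<exists>i<N. e i = g" if "g \<in> G" for g
    using e that unfolding bij_betw_def by force
  have einv: "the_inv_into {0..<N} e (e j) = j" if "j < N" for j
    using the_inv_into_f_f[OF bij_betw_imp_inj_on[OF e]] that by simp
  have Mv: "(M *\<^sub>v v) $ i = (\<Sum>j\<in>{0..<N}. (e i \<circ> e j) z * v $ j)" if "v \<in> carrier_vec N" "i < N" for v i
    using that unfolding M_def by (simp add: scalar_prod_def)
  have reindex_e: "(\<Sum>j\<in>{0..<N}. f (e j)) = (\<Sum>g\<in>G. f g)" for f :: "('K \<Rightarrow> 'K) \<Rightarrow> 'K"
    using sum.reindex_bij_betw[OF e] .
  have ker: "v = 0\<^sub>v N" if v: "v \<in> carrier_vec N" and Mv0: "M *\<^sub>v v = 0\<^sub>v N" for v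
  proof -
    define x where "x g = v $ (the_inv_into {0..<N} e g)" for g
    have xe: "x (e j) = v $ j" if "j < N" for j using einv[OF that] unfolding x_def by simp
    have "\<forall>h\<in>G. (\<Sum>g\<in>G. x g * (h \<circ> g) z) = 0"
    proof
      fix h assume h: "h \<in> G"
      obtain i where i: "i < N" "e i = h" using esurj[OF h] by auto
      have "(\<Sum>g\<in>G. x g * (h \<circ> g) z) = (\<Sum>j\<in>{0..<N}. x (e j) * (h \<circ> e j) z)"
        using reindex_e[of "\<lambda>g. x g * (h \<circ> g) z"] by simp
      also have "\<dots> = (\<Sum>j\<in>{0..<N}. (e i \<circ> e j) z * v $ j)"
        using xe i by (intro sum.cong refl) (auto simp: mult.commute)
      also have "\<dots> = (M *\<^sub>v v) $ i" using Mv[OF v i(1)] by simp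
      also have "\<dots> = 0" using Mv0 i by simp
      finally show "(\<Sum>g\<in>G. x g * (h \<circ> g) z) = 0" .
    qed
    then have x0: "x g = 0" if "g \<in> G" for g using KZ that by blast
    have "v $ j = 0" if "j < N" for j using xe[OF that] x0[OF eG[OF that]] by simp
    then show ?thesis using v by (intro eq_vecI) auto
  qed
  have detM: "det M \<noteq> 0" using det_0_iff_vec_prod_zero_field[OF Mc] ker by auto
  obtain B where B: "B \<in> carrier_mat N N" "B * M = 1\<^sub>m N" "M * B = 1\<^sub>m N"
    using det_non_zero_imp_unit[OF Mc detM, of "()"] unfolding Units_def ring_mat_def by auto
  have uniq: "u = B *\<^sub>v b" if "u \<in> carrier_vec N" "M *\<^sub>v u = b" for u b
  proof -
    have "u = 1\<^sub>m N *\<^sub>v u" using that(1) by simp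
    also have "\<dots> = (B * M) *\<^sub>v u" using B by simp
    also have "\<dots> = B *\<^sub>v (M *\<^sub>v u)" using assoc_mult_mat_vec B(1) Mc that(1) by blast
    finally show ?thesis using that(2) by simp
  qed
  have solve: "\<exists>xs. (\<forall>g\<in>G. xs g \<in> L) \<and> y = (\<Sum>g\<in>G. xs g * g z)" for y
  proof -
    define b where "b = vec N (\<lambda>i. e i y)"
    define sol where "sol = B *\<^sub>v b"
    have bc: "b \<in> carrier_vec N" unfolding b_def by simp
    have solc: "sol \<in> carrier_vec N" using B(1) unfolding sol_def b_def by simp
    have Msol: "M *\<^sub>v sol = b"
    proof -
      have "M *\<^sub>v sol = (M * B) *\<^sub>v b" unfolding sol_def using assoc_mult_mat_vec Mc B(1) bc by metis
      also have "\<dots> = b" using B(3) bc by simp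
      finally show ?thesis .
    qed
    have rows: "(\<Sum>j\<in>{0..<N}. (e i \<circ> e j) z * sol $ j) = e i y" if "i < N" for i
      using Mv[OF solc that] Msol that unfolding b_def by simp
    have fixsol: "\<sigma> (sol $ j) = sol $ j" if \<sigma>: "\<sigma> \<in> G" and j: "j < N" for \<sigma> j
    proof -
      define u where "u = vec N (\<lambda>j. \<sigma> (sol $ j))"
      have uc: "u \<in> carrier_vec N" unfolding u_def by simp
      have "M *\<^sub>v u = b"
      proof (rule eq_vecI)
        show "dim_vec (M *\<^sub>v u) = dim_vec b" using Mc unfolding b_def by simp
        fix i assume "i < dim_vec b"
        then have i: "i < N" unfolding b_def by simp
        have "inv \<sigma> \<circ> e i \<in> G" using comp invG \<sigma> eG[OF i] by blast
        then obtain i' where i': "i' < N" "e i' = inv \<sigma> \<circ> e i" using esurj by blast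
        have "(M *\<^sub>v u) $ i = (\<Sum>j\<in>{0..<N}. (e i \<circ> e j) z * \<sigma> (sol $ j))"
          using Mv[OF uc i] unfolding u_def by simp
        also have "\<dots> = (\<Sum>j\<in>{0..<N}. \<sigma> ((e i' \<circ> e j) z * sol $ j))"
          using i' \<sigma> by (intro sum.cong refl) (simp add: mul sinv)
        also have "\<dots> = \<sigma> (\<Sum>j\<in>{0..<N}. (e i' \<circ> e j) z * sol $ j)"
          using additive_sum[of \<sigma> "\<lambda>j. (e i' \<circ> e j) z * sol $ j" "{0..<N}"] add[OF \<sigma>] s0[OF \<sigma>] by simp
        also have "\<dots> = \<sigma> (e i' y)" using rows[OF i'(1)] by simp
        also have "\<dots> = e i y" using i' \<sigma> by (simp add: sinv)
        also have "\<dots> = b $ i" using i unfolding b_def by simp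
        finally show "(M *\<^sub>v u) $ i = b $ i" .
      qed
      then have "u = sol" using uniq[OF uc] unfolding sol_def by simp
      then have "sol $ j = u $ j" by simp
      also have "\<dots> = \<sigma> (sol $ j)" using j unfolding u_def by simp
      finally show ?thesis by simp
    qed
    define xs where "xs g = sol $ (the_inv_into {0..<N} e g)" for g
    have xse: "xs (e j) = sol $ j" if "j < N" for j using einv[OF that] unfolding xs_def by simp
    have xsL: "\<forall>g\<in>G. xs g \<in> L"
    proof
      fix g assume g: "g \<in> G"
      obtain j where j: "j < N" "e j = g" using esurj[OF g] by auto
      show "xs g \<in> L" unfolding L_def fixed_field_def using fixsol j xse by auto
    qed
    obtain i0 where i0: "i0 < N" "e i0 = id" using esurj[OF idG] by auto
    have "y = (\<Sum>j\<in>{0..<N}. (e i0 \<circ> e j) z * sol $ j)" using rows[OF i0(1)] i0(2) by simp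
    also have "\<dots> = (\<Sum>j\<in>{0..<N}. xs (e j) * e j z)"
      using i0 xse by (intro sum.cong refl) (simp add: mult.commute)
    also have "\<dots> = (\<Sum>g\<in>G. xs g * g z)" using reindex_e[of "\<lambda>g. xs g * g z"] by simp
    finally show ?thesis using xsL by blast
  qed
  have span: "span_over L ((\<lambda>s. s z) ` G) y" for y
  proof -
    obtain xs where xsL: "\<forall>g\<in>G. xs g \<in> L" and ysum: "y = (\<Sum>g\<in>G. xs g * g z)" using solve by blast
    define c where "c b = xs (the_inv_into G (\<lambda>s. s z) b)" for b
    have cL: "\<forall>b\<in>(\<lambda>s. s z) ` G. c b \<in> L"
      using xsL the_inv_into_f_f[OF injz] unfolding c_def by auto
    have "(\<Sum>b\<in>(\<lambda>s. s z) ` G. c b * b) = (\<Sum>g\<in>G. c (g z) * g z)"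
      using sum.reindex[OF injz, of "\<lambda>b. c b * b"] by simp
    also have "\<dots> = y" unfolding ysum c_def using the_inv_into_f_f[OF injz] by (intro sum.cong refl) simp
    finally show ?thesis unfolding span_over_def using fin cL by (intro exI[of _ "(\<lambda>s. s z) ` G"] exI[of _ c]) auto
  qed
  show ?thesis unfolding basis_over_def L_def[symmetric] using indep span by blast
qed

end
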